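(* Let $a<b$ and let $f:[a,b]\rightarrow\mathbb{R}$ be a twice continuously differentiable mapping in $(a,b)$ with $f''\in L^2[a,b]$. Then \[ \left|\frac{f\left(\frac{3a+b}{4}\right)+f\left(\frac{a+3b}{4}\right)}{2} -\frac{1}{b-a}\int_{a}^{b}f(t)\,dt\right|\leq \frac{(b-a)^{3/2}}{4\sqrt{3}\pi}\|f''\|_2. \]
   Context: $\|g\|_2=\left(\int_a^b g(t)^2\,dt\right)^{1/2}$. *)

theory Defs
  imports "HOL-Analysis.Analysis"
begin

definition L2_norm_on :: "real \<Rightarrow> real \<Rightarrow> (real \<Rightarrow> real) \<Rightarrow> real" where
  "L2_norm_on a b g = sqrt (integral {a..b} (\<lambda>t. (g t)^2))"

end

theory Submission
  imports Defs
begin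

lemma piece_ftc:
  fixes f f' f'' :: "real \<Rightarrow> real"
  assumes "c \<le> d"
    and d1: "\<And>x. x \<in> {c<..<d} \<Longrightarrow> (f has_real_derivative f' x) (at x)"
    and d2: "\<And>x. x \<in> {c<..<d} \<Longrightarrow> (f' has_real_derivative f'' x) (at x)"
    and cont: "continuous_on {c..d} (\<lambda>t. (t-u)^2/2 * f' t - (t-u) * f t)"
  shows "((\<lambda>t. (t-u)^2/2 * f'' t - f t) has_integral
          (((d-u)^2/2 * f' d - (d-u) * f d) - ((c-u)^2/2 * f' c - (c-u) * f c))) {c..d}"
proof -
  have "((\<lambda>t. (t-u)^2/2 * f' t - (t-u) * f t) has_vector_derivative ((x-u)^2/2 * f'' x - f x)) (at x)"
    if "x \<in> {c<..<d}" for x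
  proof -
    have "((\<lambda>t. (t-u)^2/2 * f' t - (t-u) * f t) has_real_derivative
       ((2 * (x-u) * 1)/2 * f' x + (x-u)^2/2 * f'' x - (1 * f x + (x-u) * f' x))) (at x)"
      by (auto intro!: derivative_eq_intros d1 d2 that)
    moreover have "(2 * (x-u) * 1)/2 * f' x + (x-u)^2/2 * f'' x - (1 * f x + (x-u) * f' x)
       = (x-u)^2/2 * f'' x - f x" by (simp add: field_simps)
    ultimately show ?thesis unfolding has_real_derivative_iff_has_vector_derivative by metis
  qed
  from fundamental_theorem_of_calculus_interior[OF \<open>c\<le>d\<close> cont this] show ?thesis by simp
qed

lemma bound_fprime:
  fixes f' f'' :: "real \<Rightarrow> real"
  assumes "a < c" "c \<le> d" "d < b"
    and d2: "\<And>x. x \<in> {a<..<b} \<Longrightarrow> (f' has_real_derivative f'' x) (at x)"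
    and ai: "f'' absolutely_integrable_on {a..b}"
  shows "\<bar>f' d - f' c\<bar> \<le> integral {a..b} (\<lambda>t. \<bar>f'' t\<bar>)"
proof -
  have "(f'' has_integral (f' d - f' c)) {c..d}"
    apply (rule fundamental_theorem_of_calculus[OF \<open>c\<le>d\<close>])
    apply (rule has_vector_derivative_at_within)
    using assms by (auto simp: has_real_derivative_iff_has_vector_derivative[symmetric] intro!: d2)
  hence eq: "f' d - f' c = integral {c..d} f''" by (simp add: integral_unique)
  have ai2: "f'' absolutely_integrable_on {c..d}"
    using absolutely_integrable_on_subinterval[OF ai] assms by auto
  have "\<bar>integral {c..d} f''\<bar> \<le> integral {c..d} (\<lambda>t. \<bar>f'' t\<bar>)"
    using integral_norm_bound_integral[of f'' "{c..d}" "\<lambda>t. \<bar>f'' t\<bar>"] ai2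
    by (auto simp: absolutely_integrable_on_def)
  also have "\<dots> \<le> integral {a..b} (\<lambda>t. \<bar>f'' t\<bar>)"
    apply (rule integral_subset_le)
    using assms ai ai2 by (auto simp: absolutely_integrable_on_def)
  finally show ?thesis using eq by simp
qed

lemma bound_f:
  fixes f f' :: "real \<Rightarrow> real"
  assumes "a < c" "c \<le> d" "d < b"
    and d1: "\<And>x. x \<in> {a<..<b} \<Longrightarrow> (f has_real_derivative f' x) (at x)"
    and M: "\<And>x. x \<in> {a<..<b} \<Longrightarrow> \<bar>f' x\<bar> \<le> M"
  shows "\<bar>f d - f c\<bar> \<le> M * (d - c)"
proof (cases "c = d")
  case False
  then have "c < d" using assms by auto
  from MVT2[OF this, of f f'] obtain z where z: "c < z" "z < d" "f d - f c = (d - c) * f' z"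
    using d1 assms by force
  have "\<bar>f' z\<bar> \<le> M" using M z assms by auto
  then show ?thesis using z \<open>c<d\<close> by (simp add: abs_mult mult.commute mult_left_mono)
qed simp


lemma cs_bound:
  fixes g :: "real \<Rightarrow> real"
  assumes "a < b" and gi: "(\<lambda>t. \<bar>g t\<bar>) integrable_on {a..b}" and g2: "(\<lambda>t. (g t)^2) integrable_on {a..b}"
  shows "integral {a..b} (\<lambda>t. \<bar>g t\<bar>) \<le> sqrt (b - a) * sqrt (integral {a..b} (\<lambda>t. (g t)^2))"
proof -
  define K where "K = integral {a..b} (\<lambda>t. \<bar>g t\<bar>)"
  define B where "B = integral {a..b} (\<lambda>t. (g t)^2)"
  have K0: "0 \<le> K" unfolding K_def by (rule integral_nonneg[OF gi]) auto
  have B0: "0 \<le> B" unfolding B_def by (rule integral_nonneg[OF g2]) auto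
  have L: "K \<le> (l * (b - a) + B / l) / 2" if "l > 0" for l
  proof -
    have i1: "((\<lambda>t. (l + (g t)^2 / l) / 2) has_integral (l * (b - a) + B / l) / 2) {a..b}"
    proof -
      have "((\<lambda>t. l) has_integral l * (b - a)) {a..b}"
        using has_integral_const_real[of l a b] \<open>a<b\<close> by (simp add: mult.commute)
      moreover have "((\<lambda>t. (g t)^2 / l) has_integral B / l) {a..b}"
        unfolding B_def using g2 by (intro has_integral_divide) (simp add: integrable_integral)
      ultimately have "((\<lambda>t. l + (g t)^2 / l) has_integral (l * (b - a) + B / l)) {a..b}"
        by (rule has_integral_add)
      then show ?thesis by (rule has_integral_divide)
    qed
    have i2: "((\<lambda>t. \<bar>g t\<bar>) has_integral K) {a..b}" unfolding K_def using gi by (simp add: integrable_integral)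
    show ?thesis
    proof (rule has_integral_le[OF i2 i1])
      fix t
      have "0 \<le> (l - \<bar>g t\<bar>)^2" by simp
      hence "2 * l * \<bar>g t\<bar> \<le> l^2 + (g t)^2" by (simp add: power2_eq_square algebra_simps)
      hence "\<bar>g t\<bar> \<le> (l^2 + (g t)^2) / (2*l)" using \<open>l>0\<close> by (simp add: field_simps)
      also have "\<dots> = (l + (g t)^2 / l) / 2" using \<open>l>0\<close> by (simp add: field_simps power2_eq_square)
      finally show "\<bar>g t\<bar> \<le> (l + (g t)^2 / l) / 2" .
    qed
  qed
  show ?thesis
  proof (cases "B = 0")
    case True
    show ?thesis
    proof (rule ccontr)
      assume "\<not> ?thesis"
      hence "K > 0" using True unfolding K_def B_def by simp
      from L[of "K / (b - a)"] this \<open>a<b\<close> True have "K \<le> K / 2" by simp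
      with \<open>K>0\<close> show False by simp
    qed
  next
    case False
    hence Bp: "B > 0" using B0 by simp
    define s where "s = sqrt B"
    define r where "r = sqrt (b - a)"
    have sp: "s > 0" and rp: "r > 0" using Bp \<open>a<b\<close> by (auto simp: s_def r_def)
    have Bs: "B = s^2" and br: "b - a = r^2" using B0 \<open>a<b\<close> by (auto simp: s_def r_def)
    from L[of "s / r"] sp rp have "K \<le> (s / r * (b - a) + B / (s / r)) / 2" by simp
    also have "\<dots> = r * s" unfolding Bs br using sp rp by (simp add: field_simps power2_eq_square)
    finally show ?thesis unfolding K_def B_def r_def s_def .
  qed
qed

lemma G_isCont:
  fixes f f' f'' :: "real \<Rightarrow> real"
  assumes d1: "(f has_real_derivative f' x) (at x)" and d2: "(f' has_real_derivative f'' x) (at x)"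
  shows "isCont (\<lambda>t. (t-u)^2/2 * f' t - (t-u) * f t) x"
  using DERIV_isCont[OF d1] DERIV_isCont[OF d2] by (intro continuous_intros) auto

lemma G_cont_int:
  fixes f f' f'' :: "real \<Rightarrow> real"
  assumes "a < c" "d < b"
    and d1: "\<And>x. x \<in> {a<..<b} \<Longrightarrow> (f has_real_derivative f' x) (at x)"
    and d2: "\<And>x. x \<in> {a<..<b} \<Longrightarrow> (f' has_real_derivative f'' x) (at x)"
  shows "continuous_on {c..d} (\<lambda>t. (t-u)^2/2 * f' t - (t-u) * f t)"
proof (rule continuous_at_imp_continuous_on, rule ballI)
  fix x assume "x \<in> {c..d}"
  then have xi: "x \<in> {a<..<b}" using assms by auto
  show "isCont (\<lambda>t. (t-u)^2/2 * f' t - (t-u) * f t) x" by (rule G_isCont[of f f' x f'', OF d1[OF xi] d2[OF xi]])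
qed

lemma G_cont_left:
  fixes f f' f'' :: "real \<Rightarrow> real"
  assumes "a < d" "d < b"
    and d1: "\<And>x. x \<in> {a<..<b} \<Longrightarrow> (f has_real_derivative f' x) (at x)"
    and d2: "\<And>x. x \<in> {a<..<b} \<Longrightarrow> (f' has_real_derivative f'' x) (at x)"
    and M: "\<And>x. x \<in> {a<..<b} \<Longrightarrow> \<bar>f' x\<bar> \<le> M"
    and N: "\<And>x. x \<in> {a<..<b} \<Longrightarrow> \<bar>f x\<bar> \<le> N"
  shows "continuous_on {a..d} (\<lambda>t. (t-a)^2/2 * f' t - (t-a) * f t)"
  unfolding continuous_on_eq_continuous_within
proof
  fix x assume x: "x \<in> {a..d}"
  show "continuous (at x within {a..d}) (\<lambda>t. (t-a)^2/2 * f' t - (t-a) * f t)"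
  proof (cases "x = a")
    case False
    then have xi: "x \<in> {a<..<b}" using x assms by auto
    then show ?thesis using G_isCont[of f f' x f'', OF d1[OF xi] d2[OF xi]] continuous_at_imp_continuous_at_within by blast
  next
    case True
    have "((\<lambda>t. (t-a)^2/2 * f' t - (t-a) * f t) \<longlongrightarrow> 0) (at a within {a..d})"
    proof (rule Lim_null_comparison)
      show "\<forall>\<^sub>F t in at a within {a..d}. norm ((t-a)^2/2 * f' t - (t-a) * f t) \<le> (t-a)^2/2 * M + \<bar>t-a\<bar> * N"
        unfolding eventually_at_filter
      proof (intro always_eventually allI impI)
        fix t assume t: "t \<noteq> a" "t \<in> {a..d}"
        then have tin: "t \<in> {a<..<b}" using assms by auto
        have "norm ((t-a)^2/2 * f' t - (t-a) * f t) \<le> \<bar>(t-a)^2/2 * f' t\<bar> + \<bar>(t-a) * f t\<bar>"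
          by (simp add: abs_triangle_ineq4)
        also have "\<dots> \<le> (t-a)^2/2 * M + \<bar>t-a\<bar> * N"
          using M[OF tin] N[OF tin]
          by (intro add_mono) (auto simp: abs_mult intro!: mult_left_mono)
        finally show "norm ((t-a)^2/2 * f' t - (t-a) * f t) \<le> (t-a)^2/2 * M + \<bar>t-a\<bar> * N" .
      qed
      show "((\<lambda>t. (t-a)^2/2 * M + \<bar>t-a\<bar> * N) \<longlongrightarrow> 0) (at a within {a..d})"
        by (rule tendsto_eq_intros refl | simp)+
    qed
    then show ?thesis using True by (simp add: continuous_within)
  qed
qed

lemma G_cont_right:
  fixes f f' f'' :: "real \<Rightarrow> real"
  assumes "a < c" "c < b"
    and d1: "\<And>x. x \<in> {a<..<b} \<Longrightarrow> (f has_real_derivative f' x) (at x)"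
    and d2: "\<And>x. x \<in> {a<..<b} \<Longrightarrow> (f' has_real_derivative f'' x) (at x)"
    and M: "\<And>x. x \<in> {a<..<b} \<Longrightarrow> \<bar>f' x\<bar> \<le> M"
    and N: "\<And>x. x \<in> {a<..<b} \<Longrightarrow> \<bar>f x\<bar> \<le> N"
  shows "continuous_on {c..b} (\<lambda>t. (t-b)^2/2 * f' t - (t-b) * f t)"
  unfolding continuous_on_eq_continuous_within
proof
  fix x assume x: "x \<in> {c..b}"
  show "continuous (at x within {c..b}) (\<lambda>t. (t-b)^2/2 * f' t - (t-b) * f t)"
  proof (cases "x = b")
    case False
    then have xi: "x \<in> {a<..<b}" using x assms by auto
    then show ?thesis using G_isCont[of f f' x f'', OF d1[OF xi] d2[OF xi]] continuous_at_imp_continuous_at_within by blast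
  next
    case True
    have "((\<lambda>t. (t-b)^2/2 * f' t - (t-b) * f t) \<longlongrightarrow> 0) (at b within {c..b})"
    proof (rule Lim_null_comparison)
      show "\<forall>\<^sub>F t in at b within {c..b}. norm ((t-b)^2/2 * f' t - (t-b) * f t) \<le> (t-b)^2/2 * M + \<bar>t-b\<bar> * N"
        unfolding eventually_at_filter
      proof (intro always_eventually allI impI)
        fix t assume t: "t \<noteq> b" "t \<in> {c..b}"
        then have tin: "t \<in> {a<..<b}" using assms by auto
        have "norm ((t-b)^2/2 * f' t - (t-b) * f t) \<le> \<bar>(t-b)^2/2 * f' t\<bar> + \<bar>(t-b) * f t\<bar>"
          by (simp add: abs_triangle_ineq4)
        also have "\<dots> \<le> (t-b)^2/2 * M + \<bar>t-b\<bar> * N"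
          using M[OF tin] N[OF tin]
          by (intro add_mono) (auto simp: abs_mult intro!: mult_left_mono)
        finally show "norm ((t-b)^2/2 * f' t - (t-b) * f t) \<le> (t-b)^2/2 * M + \<bar>t-b\<bar> * N" .
      qed
      show "((\<lambda>t. (t-b)^2/2 * M + \<bar>t-b\<bar> * N) \<longlongrightarrow> 0) (at b within {c..b})"
        by (rule tendsto_eq_intros refl | simp)+
    qed
    then show ?thesis using True by (simp add: continuous_within)
  qed
qed

lemma phi_ai:
  fixes g :: "real \<Rightarrow> real"
  assumes "g absolutely_integrable_on {c..d}"
  shows "(\<lambda>t. (t-u)^2/2 * g t) absolutely_integrable_on {c..d}"
proof (rule absolutely_integrable_bounded_measurable_product_real[OF _ _ _ assms])
  have c: "continuous_on {c..d} (\<lambda>t::real. (t-u)^2/2)" by (intro continuous_intros) auto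
  show "(\<lambda>t::real. (t-u)^2/2) \<in> borel_measurable (lebesgue_on {c..d})"
    by (rule continuous_imp_measurable_on_sets_lebesgue[OF c]) auto
  show "{c..d} \<in> sets lebesgue" by auto
  show "bounded ((\<lambda>t::real. (t-u)^2/2) ` {c..d})"
    by (rule compact_imp_bounded[OF compact_continuous_image[OF c compact_Icc]])
qed

lemma phi_bound:
  fixes g :: "real \<Rightarrow> real"
  assumes ai: "g absolutely_integrable_on {c..d}" and hb: "\<And>t. t \<in> {c..d} \<Longrightarrow> \<bar>t - u\<bar> \<le> h"
  shows "\<bar>integral {c..d} (\<lambda>t. (t-u)^2/2 * g t)\<bar> \<le> h^2/2 * integral {c..d} (\<lambda>t. \<bar>g t\<bar>)"
proof -
  have "norm (integral {c..d} (\<lambda>t. (t-u)^2/2 * g t)) \<le> integral {c..d} (\<lambda>t. h^2/2 * \<bar>g t\<bar>)"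
  proof (rule integral_norm_bound_integral)
    show "(\<lambda>t. (t-u)^2/2 * g t) integrable_on {c..d}"
      using phi_ai[OF ai] by (simp add: absolutely_integrable_on_def)
    show "(\<lambda>t. h^2/2 * \<bar>g t\<bar>) integrable_on {c..d}"
      using ai integrable_on_cmult_left[of "\<lambda>t. \<bar>g t\<bar>" "{c..d}" "h^2/2"] by (simp add: absolutely_integrable_on_def)
    fix t assume t: "t \<in> {c..d}"
    have "(t-u)^2 \<le> h^2" using hb[OF t] by (metis abs_le_square_iff abs_ge_zero order_trans power2_abs abs_le_D1 abs_of_nonneg)
    then show "norm ((t-u)^2/2 * g t) \<le> h^2/2 * \<bar>g t\<bar>"
      by (simp add: abs_mult mult_right_mono)
  qed
  also have "\<dots> = h^2/2 * integral {c..d} (\<lambda>t. \<bar>g t\<bar>)" by simp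
  finally show ?thesis by simp
qed

theorem corollary2p5:
  fixes f f' f'' :: "real \<Rightarrow> real" and a b :: real
  assumes "a < b"
    and "\<And>x. x \<in> {a<..<b} \<Longrightarrow> (f has_real_derivative f' x) (at x)"
    and "\<And>x. x \<in> {a<..<b} \<Longrightarrow> (f' has_real_derivative f'' x) (at x)"
    and "continuous_on {a<..<b} f''"
    and "(\<lambda>t. (f'' t)^2) integrable_on {a..b}"
  shows "\<bar>(f ((3*a + b)/4) + f ((a + 3*b)/4)) / 2 - (1/(b - a)) * integral {a..b} f\<bar>
           \<le> (b - a) powr (3/2) / (4 * sqrt 3 * pi) * L2_norm_on a b f''"
proof -
  note ab = assms(1) and d1 = assms(2) and d2 = assms(3) and cf2 = assms(4) and sq = assms(5)
  define x1 where "x1 = (3*a + b)/4"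
  define m where "m = (a + b)/2"
  define x2 where "x2 = (a + 3*b)/4"
  define h where "h = (b - a)/4"
  have hp: "h > 0" using ab by (simp add: h_def)
  have ord: "a < x1" "x1 < m" "m < x2" "x2 < b" using ab by (auto simp: x1_def m_def x2_def)
  have ai: "f'' absolutely_integrable_on {a..b}"
  proof -
    have "f'' absolutely_integrable_on {a<..<b}"
    proof (rule measurable_bounded_by_integrable_imp_absolutely_integrable)
      show "f'' \<in> borel_measurable (lebesgue_on {a<..<b})"
        by (rule continuous_imp_measurable_on_sets_lebesgue[OF cf2]) auto
      show "{a<..<b} \<in> sets lebesgue" by auto
      show "(\<lambda>t. 1 + (f'' t)^2) integrable_on {a<..<b}"
        using sq by (intro integrable_add) (auto simp: integrable_on_open_interval_real)
      fix x
      show "norm (f'' x) \<le> 1 + (f'' x)^2"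
      proof -
        have "0 \<le> (\<bar>f'' x\<bar> - 1)^2" by simp
        then have "2*\<bar>f'' x\<bar> \<le> 1 + (f'' x)^2" by (simp add: power2_eq_square algebra_simps abs_mult_self_eq)
        moreover have "0 \<le> (f'' x)^2" by simp
        ultimately show ?thesis unfolding real_norm_def by linarith
      qed
    qed
    then show ?thesis using absolutely_integrable_on_open_interval[where f=f'' and a=a and b=b] by simp
  qed
  have aint: "(\<lambda>t. \<bar>f'' t\<bar>) integrable_on {a..b}" using ai by (simp add: absolutely_integrable_on_def)
  define K where "K = integral {a..b} (\<lambda>t. \<bar>f'' t\<bar>)"
  define M where "M = \<bar>f' m\<bar> + K"
  have Mb: "\<bar>f' x\<bar> \<le> M" if "x \<in> {a<..<b}" for x
  proof (cases "x \<le> m")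
    case True
    have "\<bar>f' m - f' x\<bar> \<le> K" unfolding K_def
      by (rule bound_fprime[OF _ True _ d2 ai]) (use that ord in auto)
    then show ?thesis unfolding M_def by linarith
  next
    case False
    have "\<bar>f' x - f' m\<bar> \<le> K" unfolding K_def
      by (rule bound_fprime[OF _ _ _ d2 ai]) (use that ord False in auto)
    then show ?thesis unfolding M_def by linarith
  qed
  have M0: "0 \<le> M" using Mb[of m] ord by auto
  define N where "N = \<bar>f m\<bar> + M * (b - a)"
  have Nb: "\<bar>f x\<bar> \<le> N" if "x \<in> {a<..<b}" for x
  proof (cases "x \<le> m")
    case True
    have "\<bar>f m - f x\<bar> \<le> M * (m - x)"
      by (rule bound_f[OF _ True _ d1 Mb]) (use that ord in auto)
    moreover have "M * (m - x) \<le> M * (b - a)" using that ord M0 by (intro mult_left_mono) auto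
    ultimately show ?thesis unfolding N_def by linarith
  next
    case False
    have "\<bar>f x - f m\<bar> \<le> M * (x - m)"
      by (rule bound_f[OF _ _ _ d1 Mb]) (use that ord False in auto)
    moreover have "M * (x - m) \<le> M * (b - a)" using that ord M0 by (intro mult_left_mono) auto
    ultimately show ?thesis unfolding N_def by linarith
  qed
  define G where "G = (\<lambda>u t. (t-u)^2/2 * f' t - (t-u) * f t)"
  have sub: "\<And>c d x. a \<le> c \<Longrightarrow> d \<le> b \<Longrightarrow> x \<in> {c<..<d} \<Longrightarrow> x \<in> {a<..<b}" by auto
  have H1: "((\<lambda>t. (t-a)^2/2 * f'' t - f t) has_integral (G a x1 - G a a)) {a..x1}"
    unfolding G_def
    by (rule piece_ftc) (use ord d1 d2 G_cont_left[where a=a and d=x1 and b=b and f=f and f'=f' and f''=f'' and M=M and N=N, OF _ _ d1 d2 Mb Nb] in auto)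
  have H2: "((\<lambda>t. (t-m)^2/2 * f'' t - f t) has_integral (G m m - G m x1)) {x1..m}"
    unfolding G_def
    by (rule piece_ftc) (use ord d1 d2 G_cont_int[where a=a and c=x1 and d=m and b=b and f=f and f'=f' and f''=f'' and u=m, OF _ _ d1 d2] in auto)
  have H3: "((\<lambda>t. (t-m)^2/2 * f'' t - f t) has_integral (G m x2 - G m m)) {m..x2}"
    unfolding G_def
    by (rule piece_ftc) (use ord d1 d2 G_cont_int[where a=a and c=m and d=x2 and b=b and f=f and f'=f' and f''=f'' and u=m, OF _ _ d1 d2] in auto)
  have H4: "((\<lambda>t. (t-b)^2/2 * f'' t - f t) has_integral (G b b - G b x2)) {x2..b}"
    unfolding G_def
    by (rule piece_ftc) (use ord d1 d2 G_cont_right[where a=a and c=x2 and b=b and f=f and f'=f' and f''=f'' and M=M and N=N, OF _ _ d1 d2 Mb Nb] in auto)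
  have aisub: "\<And>c d. a \<le> c \<Longrightarrow> d \<le> b \<Longrightarrow> f'' absolutely_integrable_on {c..d}"
    using absolutely_integrable_on_subinterval[OF ai] by auto
  have fpiece: "(f has_integral (integral {c..d} (\<lambda>t. (t-u)^2/2 * f'' t) - D)) {c..d}"
    if H: "((\<lambda>t. (t-u)^2/2 * f'' t - f t) has_integral D) {c..d}" and "a \<le> c" "d \<le> b" for c d u D
  proof -
    have "(\<lambda>t. (t-u)^2/2 * f'' t) integrable_on {c..d}"
      using phi_ai[OF aisub[OF that(2,3)]] by (simp add: absolutely_integrable_on_def)
    then have "((\<lambda>t. (t-u)^2/2 * f'' t) has_integral integral {c..d} (\<lambda>t. (t-u)^2/2 * f'' t)) {c..d}"
      by (rule integrable_integral)
    from has_integral_diff[OF this H] show ?thesis by simp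
  qed
  define J1 where "J1 = integral {a..x1} (\<lambda>t. (t-a)^2/2 * f'' t)"
  define J2 where "J2 = integral {x1..m} (\<lambda>t. (t-m)^2/2 * f'' t)"
  define J3 where "J3 = integral {m..x2} (\<lambda>t. (t-m)^2/2 * f'' t)"
  define J4 where "J4 = integral {x2..b} (\<lambda>t. (t-b)^2/2 * f'' t)"
  have "(f has_integral ((J1 - (G a x1 - G a a)) + (J2 - (G m m - G m x1)) + (J3 - (G m x2 - G m m))
           + (J4 - (G b b - G b x2)))) {a..b}"
    unfolding J1_def J2_def J3_def J4_def
    using ord
    by (intro has_integral_combine[of a x2 b] has_integral_combine[of a m x2] has_integral_combine[of a x1 m]
        fpiece[OF H1] fpiece[OF H2] fpiece[OF H3] fpiece[OF H4]) auto
  then have intf: "integral {a..b} f = (J1 + J2 + J3 + J4) + 2*h*(f x1 + f x2)"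
    by (simp add: integral_unique G_def x1_def m_def x2_def h_def field_simps power2_eq_square)
  have Ksum: "K = integral {a..x1} (\<lambda>t. \<bar>f'' t\<bar>) + integral {x1..m} (\<lambda>t. \<bar>f'' t\<bar>)
       + integral {m..x2} (\<lambda>t. \<bar>f'' t\<bar>) + integral {x2..b} (\<lambda>t. \<bar>f'' t\<bar>)"
  proof -
    have i1: "(\<lambda>t. \<bar>f'' t\<bar>) integrable_on {a..x2}" and i2: "(\<lambda>t. \<bar>f'' t\<bar>) integrable_on {a..m}"
      using aint ord by (auto intro: integrable_on_subinterval)
    show ?thesis unfolding K_def
      using Henstock_Kurzweil_Integration.integral_combine[OF _ _ aint, of x2] Henstock_Kurzweil_Integration.integral_combine[OF _ _ i1, of m] Henstock_Kurzweil_Integration.integral_combine[OF _ _ i2, of x1] ord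
      by simp
  qed
  have B1: "\<bar>J1\<bar> \<le> h^2/2 * integral {a..x1} (\<lambda>t. \<bar>f'' t\<bar>)"
    unfolding J1_def by (rule phi_bound[OF aisub]) (use ord in \<open>auto simp: x1_def h_def\<close>)
  have B2: "\<bar>J2\<bar> \<le> h^2/2 * integral {x1..m} (\<lambda>t. \<bar>f'' t\<bar>)"
    unfolding J2_def by (rule phi_bound[OF aisub]) (use ord in \<open>auto simp: x1_def m_def h_def field_simps\<close>)
  have B3: "\<bar>J3\<bar> \<le> h^2/2 * integral {m..x2} (\<lambda>t. \<bar>f'' t\<bar>)"
    unfolding J3_def by (rule phi_bound[OF aisub]) (use ord in \<open>auto simp: x2_def m_def h_def field_simps\<close>)
  have B4: "\<bar>J4\<bar> \<le> h^2/2 * integral {x2..b} (\<lambda>t. \<bar>f'' t\<bar>)"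
    unfolding J4_def by (rule phi_bound[OF aisub]) (use ord in \<open>auto simp: x2_def h_def\<close>)
  have Jb: "\<bar>J1 + J2 + J3 + J4\<bar> \<le> h^2/2 * K"
    using B1 B2 B3 B4 Ksum by (simp add: algebra_simps)
  define S where "S = L2_norm_on a b f''"
  have S0: "0 \<le> S" unfolding S_def L2_norm_on_def
    by (rule real_sqrt_ge_zero, rule integral_nonneg[OF sq]) auto
  have KS: "K \<le> sqrt (b - a) * S"
    unfolding K_def S_def L2_norm_on_def by (rule cs_bound[OF ab aint sq])
  have E: "(f x1 + f x2) / 2 - (1/(b - a)) * integral {a..b} f = - (J1 + J2 + J3 + J4) / (b - a)"
    using ab unfolding intf h_def by (simp add: field_simps)
  have "\<bar>(f x1 + f x2) / 2 - (1/(b - a)) * integral {a..b} f\<bar> = \<bar>J1 + J2 + J3 + J4\<bar> / (b - a)"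
    unfolding E using ab by simp
  also have "\<dots> \<le> (h^2/2 * K) / (b - a)" using Jb ab by (intro divide_right_mono) auto
  also have "\<dots> = (b - a) / 32 * K" using ab by (simp add: h_def field_simps power2_eq_square)
  also have "\<dots> \<le> (b - a) / 32 * (sqrt (b - a) * S)" using KS ab by (intro mult_left_mono) auto
  also have "\<dots> = (b - a) powr (3/2) / 32 * S"
  proof -
    have "(b - a) powr (3/2) = (b - a) powr 1 * (b - a) powr (1/2)"
      using ab powr_add[of "b - a" 1 "1/2"] by simp
    also have "\<dots> = (b - a) * sqrt (b - a)" using ab by (simp add: powr_half_sqrt)
    finally show ?thesis by simp
  qed
  also have "\<dots> \<le> (b - a) powr (3/2) / (4 * sqrt 3 * pi) * S"
  proof -
    have s3: "sqrt 3 \<le> 2" by (simp add: real_sqrt_le_iff real_le_lsqrt)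
    have "4 * sqrt 3 * pi \<le> 4 * 2 * 4"
      using s3 pi_less_4 by (intro mult_mono) auto
    then have "(b - a) powr (3/2) / 32 \<le> (b - a) powr (3/2) / (4 * sqrt 3 * pi)"
      by (intro divide_left_mono) auto
    then show ?thesis using S0 by (rule mult_right_mono)
  qed
  finally show ?thesis unfolding S_def x1_def x2_def .
qed

end
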